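(* Let $\mathcal{E}_{tr}$ be a finite set of environments and fix a representation $\Phi:\mathcal{X}\to\mathcal{Z}\subseteq\mathbb{R}^d$. Suppose the classifier class $\mathcal{H}_w$ consists of linear models $w(z)=\mathbf{w}^t z$ with $\mathbf{w}$ ranging over a closed, bounded, convex set $W\subseteq\mathbb{R}^d$ with non-empty interior, and suppose the loss $\ell(\mathbf{w}^t z,Y)$ (with $Y\in\mathbb{R}$) is convex and continuous in $\mathbf{w}$. Then a pure strategy Nash equilibrium of the ensemble game exists. Moreover, if at a Nash equilibrium $\{\mathbf{w}^q\}_{q\in\mathcal{E}_{tr}}$ every $\mathbf{w}^q$ lies in the interior of $W$, then the ensemble predictor $z\mapsto(\frac{1}{|\mathcal{E}_{tr}|}\sum_q\mathbf{w}^q)^t z$ composed with $\Phi$ is an invariant predictor among all linear models, i.e. $\bar{\mathbf{w}}=\frac{1}{|\mathcal{E}_{tr}|}\sum_q\mathbf{w}^q$ satisfies $R^e(\bar{\mathbf{w}}^t\Phi)\le R^e(\mathbf{v}^t\Phi)$ for all $\mathbf{v}\in\mathbb{R}^d$ and all $e\in\mathcal{E}_{tr}$.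
   Context: For each $e\in\mathcal{E}_{tr}$ there is a distribution of $(X^e,Y^e)$ with $X^e\in\mathcal{X}\subseteq\mathbb{R}^n$, $Y^e\in\mathbb{R}$; the risk of a predictor $f$ is $R^e(f)=\mathbb{E}[\ell(f(X^e),Y^e)]$. Ensemble game with representation $\Phi$: the players are the environments; player $e$ chooses $\mathbf{w}^e\in W$; its utility is $u_e=-R^e(w^{av}\circ\Phi)$ where $w^{av}(z)=(\frac{1}{|\mathcal{E}_{tr}|}\sum_q\mathbf{w}^q)^t z$. A pure Nash equilibrium is a profile from which no player can strictly increase its utility by unilaterally changing its own $\mathbf{w}^e$ within $W$. *)

theory Defs
  imports "HOL-Probability.Probability"
begin

definition lin_risk ::
  "((real^'n) \<times> real) measure \<Rightarrow> (real \<Rightarrow> real \<Rightarrow> real) \<Rightarrow> (real^'n \<Rightarrow> real^'d) \<Rightarrow> real^'d \<Rightarrow> real"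
  where "lin_risk D l Phi w = (\<integral>p. l (w \<bullet> Phi (fst p)) (snd p) \<partial>D)"

definition w_av :: "'e set \<Rightarrow> ('e \<Rightarrow> real^'d) \<Rightarrow> real^'d"
  where "w_av E ws = (1 / real (card E)) *\<^sub>R (\<Sum>q\<in>E. ws q)"

definition ens_utility ::
  "'e set \<Rightarrow> ('e \<Rightarrow> ((real^'n) \<times> real) measure) \<Rightarrow> (real \<Rightarrow> real \<Rightarrow> real) \<Rightarrow> (real^'n \<Rightarrow> real^'d)
   \<Rightarrow> 'e \<Rightarrow> ('e \<Rightarrow> real^'d) \<Rightarrow> real"
  where "ens_utility E D l Phi e ws = - lin_risk (D e) l Phi (w_av E ws)"

definition ens_pure_NE ::
  "'e set \<Rightarrow> ('e \<Rightarrow> ((real^'n) \<times> real) measure) \<Rightarrow> (real \<Rightarrow> real \<Rightarrow> real) \<Rightarrow> (real^'n \<Rightarrow> real^'d)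
   \<Rightarrow> (real^'d) set \<Rightarrow> ('e \<Rightarrow> real^'d) \<Rightarrow> bool"
  where "ens_pure_NE E D l Phi W ws \<longleftrightarrow>
     (\<forall>q\<in>E. ws q \<in> W) \<and>
     (\<forall>e\<in>E. \<forall>v\<in>W. ens_utility E D l Phi e (ws(e := v)) \<le> ens_utility E D l Phi e ws)"

end

theory Submission
  imports Defs
begin



lemma tri6_aux:
  fixes fq q fr r fs s e :: real
  assumes "\<bar>fr - r\<bar> \<le> \<bar>fs - fr\<bar> + \<bar>s - r\<bar>" "\<bar>fr - fq\<bar> \<le> e / 6" "\<bar>fs - fq\<bar> \<le> e / 6"
    "\<bar>r - q\<bar> \<le> e / 6" "\<bar>s - q\<bar> \<le> e / 6"
  shows "\<bar>fq - q\<bar> \<le> e"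
proof -
  have "\<bar>fs - fr\<bar> \<le> e / 3" using assms(2,3) by linarith
  moreover have "\<bar>s - r\<bar> \<le> e / 3" using assms(4,5) by linarith
  ultimately have "\<bar>fr - r\<bar> \<le> 2 * e / 3" using assms(1) by linarith
  then show ?thesis using assms(2,4) by linarith
qed

lemma approx_brouwer:
  fixes f :: "('i \<Rightarrow> real) \<Rightarrow> ('i \<Rightarrow> real)" and I :: "'i set"
  assumes finI: "finite I"
  and maps: "\<And>x. (\<forall>i\<in>I. 0 \<le> x i \<and> x i \<le> 1) \<Longrightarrow> (\<forall>i\<in>I. 0 \<le> f x i \<and> f x i \<le> 1)"
  and uc: "\<And>\<epsilon>. \<epsilon> > 0 \<Longrightarrow> \<exists>\<delta>>0. \<forall>x y. (\<forall>i\<in>I. 0 \<le> x i \<and> x i \<le> 1) \<longrightarrow> (\<forall>i\<in>I. 0 \<le> y i \<and> y i \<le> 1)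
            \<longrightarrow> (\<forall>i\<in>I. \<bar>x i - y i\<bar> \<le> \<delta>) \<longrightarrow> (\<forall>i\<in>I. \<bar>f x i - f y i\<bar> \<le> \<epsilon>)"
  and eps: "\<epsilon> > 0"
  shows "\<exists>x. (\<forall>i\<in>I. 0 \<le> x i \<and> x i \<le> 1) \<and> (\<forall>i\<in>I. \<bar>f x i - x i\<bar> \<le> \<epsilon>)"
proof -
  define C where "C = {x. \<forall>i\<in>I. 0 \<le> x i \<and> x i \<le> (1::real)}"
  have "\<forall>x i. \<exists>y::nat. y \<le> 1 \<and> (x \<in> C \<and> i \<in> I \<and> x i = 0 \<longrightarrow> y = 0) \<and> (x \<in> C \<and> i \<in> I \<and> x i = 1 \<longrightarrow> y = 1)
     \<and> (x \<in> C \<and> i \<in> I \<and> y = 0 \<longrightarrow> x i \<le> f x i) \<and> (x \<in> C \<and> i \<in> I \<and> y = 1 \<longrightarrow> f x i \<le> x i)"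
  proof (intro allI)
    fix x i
    show "\<exists>y::nat. y \<le> 1 \<and> (x \<in> C \<and> i \<in> I \<and> x i = 0 \<longrightarrow> y = 0) \<and> (x \<in> C \<and> i \<in> I \<and> x i = 1 \<longrightarrow> y = 1)
     \<and> (x \<in> C \<and> i \<in> I \<and> y = 0 \<longrightarrow> x i \<le> f x i) \<and> (x \<in> C \<and> i \<in> I \<and> y = 1 \<longrightarrow> f x i \<le> x i)"
    proof (cases "x \<in> C \<and> i \<in> I")
      case True
      then have "0 \<le> f x i \<and> f x i \<le> 1" using maps[of x] unfolding C_def by auto
      then show ?thesis
        apply (cases "x i \<le> f x i")
         apply (rule exI[of _ "if x i = 1 then 1 else 0"]; simp)
        apply (rule exI[of _ 1]; simp)
        done
    next
      case False then show ?thesis by (intro exI[of _ 0]) auto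
    qed
  qed
  then have "\<forall>x. \<exists>g. \<forall>i. g i \<le> (1::nat) \<and> (x \<in> C \<and> i \<in> I \<and> x i = 0 \<longrightarrow> g i = 0) \<and> (x \<in> C \<and> i \<in> I \<and> x i = 1 \<longrightarrow> g i = 1)
     \<and> (x \<in> C \<and> i \<in> I \<and> g i = 0 \<longrightarrow> x i \<le> f x i) \<and> (x \<in> C \<and> i \<in> I \<and> g i = 1 \<longrightarrow> f x i \<le> x i)"
    by (subst choice_iff[symmetric]) blast
  then have "\<exists>label. \<forall>x. \<forall>i. label x i \<le> (1::nat) \<and> (x \<in> C \<and> i \<in> I \<and> x i = 0 \<longrightarrow> label x i = 0) \<and> (x \<in> C \<and> i \<in> I \<and> x i = 1 \<longrightarrow> label x i = 1)
     \<and> (x \<in> C \<and> i \<in> I \<and> label x i = 0 \<longrightarrow> x i \<le> f x i) \<and> (x \<in> C \<and> i \<in> I \<and> label x i = 1 \<longrightarrow> f x i \<le> x i)"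
    by (subst choice_iff[symmetric]) blast
  then obtain label :: "('i \<Rightarrow> real) \<Rightarrow> 'i \<Rightarrow> nat" where label:
    "\<And>x i. label x i \<le> 1"
    "\<And>x i. x \<in> C \<Longrightarrow> i \<in> I \<Longrightarrow> x i = 0 \<Longrightarrow> label x i = 0"
    "\<And>x i. x \<in> C \<Longrightarrow> i \<in> I \<Longrightarrow> x i = 1 \<Longrightarrow> label x i = 1"
    "\<And>x i. x \<in> C \<Longrightarrow> i \<in> I \<Longrightarrow> label x i = 0 \<Longrightarrow> x i \<le> f x i"
    "\<And>x i. x \<in> C \<Longrightarrow> i \<in> I \<Longrightarrow> label x i = 1 \<Longrightarrow> f x i \<le> x i"
    proof -
    assume H: "\<And>label. \<lbrakk>\<And>x i. label x i \<le> (1::nat);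
          \<And>x i. \<lbrakk>x \<in> C; i \<in> I; x i = 0\<rbrakk> \<Longrightarrow> label x i = 0;
          \<And>x i. \<lbrakk>x \<in> C; i \<in> I; x i = 1\<rbrakk> \<Longrightarrow> label x i = 1;
          \<And>x i. \<lbrakk>x \<in> C; i \<in> I; label x i = 0\<rbrakk> \<Longrightarrow> x i \<le> f x i;
          \<And>x i. \<lbrakk>x \<in> C; i \<in> I; label x i = 1\<rbrakk> \<Longrightarrow> f x i \<le> x i\<rbrakk> \<Longrightarrow> thesis"
    from \<open>\<exists>label. _\<close> obtain L where L: "\<forall>x i. L x i \<le> (1::nat) \<and> (x \<in> C \<and> i \<in> I \<and> x i = 0 \<longrightarrow> L x i = 0) \<and> (x \<in> C \<and> i \<in> I \<and> x i = 1 \<longrightarrow> L x i = 1)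
     \<and> (x \<in> C \<and> i \<in> I \<and> L x i = 0 \<longrightarrow> x i \<le> f x i) \<and> (x \<in> C \<and> i \<in> I \<and> L x i = 1 \<longrightarrow> f x i \<le> x i)" by blast
    show thesis by (rule H[of L]) (use L in auto)
  qed
  have lem1: "\<bar>f x i - x i\<bar> \<le> \<bar>f y i - f x i\<bar> + \<bar>y i - x i\<bar>"
    if "x \<in> C" "y \<in> C" "i \<in> I" "label x i \<noteq> label y i" for x y i
  proof -
    have "label x i = 0 \<and> label y i = 1 \<or> label x i = 1 \<and> label y i = 0"
      using label(1)[of x i] label(1)[of y i] that(4) by linarith
    then show ?thesis using label(4,5)[OF that(1,3)] label(4,5)[OF that(2,3)] by auto
  qed
  define e5 where "e5 = \<epsilon> / 6"
  have e5: "e5 > 0" using eps by (simp add: e5_def)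
  obtain \<delta> where \<delta>: "\<delta> > 0" "\<And>x y i. x \<in> C \<Longrightarrow> y \<in> C \<Longrightarrow> (\<forall>i\<in>I. \<bar>x i - y i\<bar> \<le> \<delta>) \<Longrightarrow> i \<in> I
      \<Longrightarrow> \<bar>f x i - f y i\<bar> \<le> e5"
    using uc[OF e5] unfolding C_def by blast
  obtain p :: nat where p: "real p > 1 / min \<delta> e5" using reals_Archimedean2 by blast
  have p0: "p > 0" using p \<delta> e5 
    by (metis gr0I min_def of_nat_0 order_less_asym zero_less_divide_1_iff)
  have m0: "min \<delta> e5 > 0" using \<delta>(1) e5 by simp
  have "1 / real p < min \<delta> e5"
  proof -
    have "1 < min \<delta> e5 * real p" using p m0 by (simp add: field_simps)
    then show ?thesis using p0 by (simp add: divide_less_eq mult.commute del: min_less_iff_conj)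
  qed
  then have pinv: "1 / real p \<le> \<delta>" "1 / real p \<le> e5" by auto
  define n where "n = card I"
  obtain b where b: "bij_betw b {..<n} I" using ex_bij_betw_nat_finite[OF finI] n_def by (metis atLeast0LessThan)
  define b' where "b' = inv_into {..<n} b"
  have b'I: "\<And>i. i \<in> I \<Longrightarrow> b' i < n" and bb': "\<And>i. i \<in> I \<Longrightarrow> b (b' i) = i"
    and b'b: "\<And>j. j < n \<Longrightarrow> b' (b j) = j" and bI: "\<And>j. j < n \<Longrightarrow> b j \<in> I"
    using b unfolding b'_def bij_betw_def
    by (auto simp: inv_into_into f_inv_into_f inv_into_f_f)
  define pt :: "(nat \<Rightarrow> nat) \<Rightarrow> 'i \<Rightarrow> real" where "pt x = (\<lambda>i. real (x (b' i)) / real p)" for x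
  have ptC: "pt x \<in> C" if "\<forall>j<n. x j \<le> p" for x
    using that b'I p0 unfolding C_def pt_def by auto
  have k1: "\<forall>x. (\<forall>i<n. x i \<le> p) \<longrightarrow> (\<forall>i<n. label (pt x) (b i) = 0 \<or> label (pt x) (b i) = 1)"
    using label(1) by (metis le_neq_trans less_one not_le)
  have k2: "\<forall>x. (\<forall>i<n. x i \<le> p) \<longrightarrow> (\<forall>i<n. x i = 0 \<longrightarrow> label (pt x) (b i) = 0)"
    using label(2) ptC bI b'b unfolding pt_def by auto
  have k3: "\<forall>x. (\<forall>i<n. x i \<le> p) \<longrightarrow> (\<forall>i<n. x i = p \<longrightarrow> label (pt x) (b i) = 1)"
  proof (intro allI impI)
    fix x i assume "\<forall>i<n. x i \<le> p" "i < n" "x i = p"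
    then show "label (pt x) (b i) = 1" using label(3)[OF ptC bI] b'b p0 unfolding pt_def by auto
  qed
  obtain q where q: "\<forall>i<n. q i < p"
    "\<forall>i<n. \<exists>r s. (\<forall>j<n. q j \<le> r j \<and> r j \<le> q j + 1) \<and> (\<forall>j<n. q j \<le> s j \<and> s j \<le> q j + 1)
        \<and> label (pt r) (b i) \<noteq> label (pt s) (b i)"
    using kuhn_lemma[of p n "\<lambda>x i. label (pt x) (b i)", OF p0 k1 k2 k3] by blast
  have close: "\<bar>pt r i - pt q i\<bar> \<le> 1 / real p" if "\<forall>j<n. q j \<le> r j \<and> r j \<le> q j + 1" "i \<in> I" for r i
  proof -
    have "q (b' i) \<le> r (b' i)" "r (b' i) \<le> q (b' i) + 1" using that b'I by auto
    then have "\<bar>real (r (b' i)) - real (q (b' i))\<bar> \<le> 1" by linarith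
    moreover have "pt r i - pt q i = (real (r (b' i)) - real (q (b' i))) / real p"
      unfolding pt_def by (simp add: diff_divide_distrib)
    ultimately show ?thesis using p0 by (simp add: divide_right_mono)
  qed
  have qC: "pt q \<in> C" using ptC q(1) by (simp add: less_imp_le)
  show ?thesis
  proof (intro exI conjI)
    show "\<forall>i\<in>I. 0 \<le> pt q i \<and> pt q i \<le> 1" using qC unfolding C_def by blast
    show "\<forall>i\<in>I. \<bar>f (pt q) i - pt q i\<bar> \<le> \<epsilon>"
    proof
      fix i assume i: "i \<in> I"
      obtain r s where rs: "\<forall>j<n. q j \<le> r j \<and> r j \<le> q j + 1" "\<forall>j<n. q j \<le> s j \<and> s j \<le> q j + 1"
        "label (pt r) (b (b' i)) \<noteq> label (pt s) (b (b' i))"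
        using q(2) b'I[OF i] by blast
      have rC: "pt r \<in> C" using rs(1) q(1) by (intro ptC) (metis Suc_eq_plus1 Suc_leI le_trans)
      have sC: "pt s \<in> C" using rs(2) q(1) by (intro ptC) (metis Suc_eq_plus1 Suc_leI le_trans)
      have lab: "label (pt r) i \<noteq> label (pt s) i" using rs(3) bb'[OF i] by simp
      have cr: "\<forall>i\<in>I. \<bar>pt r i - pt q i\<bar> \<le> \<delta>" using close[OF rs(1)] pinv by force
      have cs: "\<forall>i\<in>I. \<bar>pt s i - pt q i\<bar> \<le> \<delta>" using close[OF rs(2)] pinv by force
      have f1: "\<bar>f (pt r) i - f (pt q) i\<bar> \<le> e5" by (rule \<delta>(2)[OF rC qC cr i])
      have f2: "\<bar>f (pt s) i - f (pt q) i\<bar> \<le> e5" by (rule \<delta>(2)[OF sC qC cs i])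
      have c1: "\<bar>pt r i - pt q i\<bar> \<le> e5" using close[OF rs(1) i] pinv by linarith
      have c2: "\<bar>pt s i - pt q i\<bar> \<le> e5" using close[OF rs(2) i] pinv by linarith
      have "\<bar>f (pt r) i - pt r i\<bar> \<le> \<bar>f (pt s) i - f (pt r) i\<bar> + \<bar>pt s i - pt r i\<bar>"
        by (rule lem1[OF rC sC i lab])
      then show "\<bar>f (pt q) i - pt q i\<bar> \<le> \<epsilon>" using f1 f2 c1 c2 unfolding e5_def by (rule tri6_aux)
    qed
  qed
qed



lemma w_av_upd:
  assumes "finite E" "e \<in> E"
  shows "w_av E (ws(e:=v)) = w_av E ws + (1 / real (card E)) *\<^sub>R (v - ws e)"
proof -
  have "(\<Sum>q\<in>E. (ws(e:=v)) q) = v + (\<Sum>q\<in>E-{e}. ws q)"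
    using assms by (simp add: sum.remove)
  moreover have "(\<Sum>q\<in>E. ws q) = ws e + (\<Sum>q\<in>E-{e}. ws q)"
    using assms by (simp add: sum.remove)
  ultimately have "(\<Sum>q\<in>E. (ws(e:=v)) q) = (\<Sum>q\<in>E. ws q) + (v - ws e)" by simp
  then show ?thesis unfolding w_av_def by (simp add: scaleR_add_right)
qed

lemma w_av_in:
  assumes "finite E" "E \<noteq> {}" "convex W" "\<And>q. q \<in> E \<Longrightarrow> a q \<in> W"
  shows "w_av E a \<in> W"
proof -
  have "(\<Sum>q\<in>E. (1 / real (card E)) *\<^sub>R a q) \<in> W"
    using assms by (intro convex_sum) (auto simp: card_gt_0_iff)
  then show ?thesis unfolding w_av_def by (simp add: scaleR_sum_right)
qed

lemma w_av_dist:
  fixes a b :: "'e \<Rightarrow> real^'d"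
  assumes "finite E" "E \<noteq> {}" "\<And>q. q \<in> E \<Longrightarrow> norm (a q - b q) \<le> \<delta>"
  shows "norm (w_av E a - w_av E b) \<le> \<delta>"
proof -
  have N: "real (card E) > 0" using assms by (simp add: card_gt_0_iff)
  have "w_av E a - w_av E b = (1 / real (card E)) *\<^sub>R (\<Sum>q\<in>E. a q - b q)"
    unfolding w_av_def by (simp add: sum_subtractf scaleR_diff_right)
  then have "norm (w_av E a - w_av E b) = (1 / real (card E)) * norm (\<Sum>q\<in>E. a q - b q)"
    using N by simp
  also have "\<dots> \<le> (1 / real (card E)) * (\<Sum>q\<in>E. norm (a q - b q))"
    using N by (intro mult_left_mono norm_sum) auto
  also have "\<dots> \<le> (1 / real (card E)) * (\<Sum>q\<in>E. \<delta>)"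
    using N assms(3) by (intro mult_left_mono sum_mono) auto
  also have "\<dots> = \<delta>" using N by simp
  finally show ?thesis .
qed

lemma w_av_norm:
  fixes a :: "'e \<Rightarrow> real^'d"
  assumes "finite E" "E \<noteq> {}" "\<And>q. q \<in> E \<Longrightarrow> norm (a q) \<le> M"
  shows "norm (w_av E a) \<le> M"
  using w_av_dist[OF assms(1,2), of a "\<lambda>_. 0" M] assms(3)
  by (simp add: w_av_def)

lemma finite_delta:
  assumes "finite E" "\<And>e. e \<in> E \<Longrightarrow> \<exists>d>0. Q e d"
    and mono: "\<And>e d d'. Q e d \<Longrightarrow> 0 < d' \<Longrightarrow> d' \<le> d \<Longrightarrow> Q e d'"
  shows "\<exists>d>(0::real). \<forall>e\<in>E. Q e d"
  using assms(1,2)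
proof (induction E rule: finite_induct)
  case empty then show ?case by (intro exI[of _ 1]) auto
next
  case (insert a F)
  then obtain d1 where d1: "d1 > 0" "\<forall>e\<in>F. Q e d1" by auto
  obtain d2 where d2: "d2 > 0" "Q a d2" using insert.prems by auto
  show ?case
    by (rule exI[of _ "min d1 d2"]) (use d1 d2 mono in auto)
qed

lemma finite_seq_compact:
  fixes X :: "nat \<Rightarrow> 'e \<Rightarrow> 'a::metric_space"
  assumes "finite E" "compact W" "\<And>k q. q \<in> E \<Longrightarrow> X k q \<in> W"
  shows "\<exists>l r. strict_mono r \<and> (\<forall>q\<in>E. l q \<in> W \<and> (\<lambda>k. X (r k) q) \<longlonglongrightarrow> l q)"
  using assms(1,3)
proof (induction E rule: finite_induct)
  case empty then show ?case by (intro exI[of _ undefined] exI[of _ id]) (auto simp: strict_mono_def)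
next
  case (insert a F)
  then obtain l1 r1 where r1: "strict_mono r1" "\<forall>q\<in>F. l1 q \<in> W \<and> (\<lambda>k. X (r1 k) q) \<longlonglongrightarrow> l1 q"
    by auto
  have "\<forall>k. X (r1 k) a \<in> W" using insert.prems by auto
  then obtain la r2 where r2: "la \<in> W" "strict_mono r2" "((\<lambda>k. X (r1 k) a) \<circ> r2) \<longlonglongrightarrow> la"
    using seq_compactE[OF compact_imp_seq_compact[OF assms(2)]] by metis
  show ?case
  proof (intro exI conjI ballI)
    show "strict_mono (r1 \<circ> r2)" using r1(1) r2(2) by (rule strict_mono_o)
    fix q assume q: "q \<in> insert a F"
    show "(l1(a:=la)) q \<in> W" using q r1 r2 by auto
    show "(\<lambda>k. X ((r1 \<circ> r2) k) q) \<longlonglongrightarrow> (l1(a:=la)) q"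
    proof (cases "q = a")
      case True then show ?thesis using r2(3) by (simp add: o_def)
    next
      case False
      then have "q \<in> F" using q by auto
      then have "((\<lambda>k. X (r1 k) q) \<circ> r2) \<longlonglongrightarrow> l1 q"
        using r1(2) r2(2) LIMSEQ_subseq_LIMSEQ by blast
      then show ?thesis using False by (simp add: o_def)
    qed
  qed
qed

lemma continuous_on_Min_finite:
  fixes h :: "'b \<Rightarrow> 'a::topological_space \<Rightarrow> real"
  assumes "finite G" "G \<noteq> {}" "\<And>g. g \<in> G \<Longrightarrow> continuous_on S (h g)"
  shows "continuous_on S (\<lambda>s. Min ((\<lambda>g. h g s) ` G))"
  using assms
proof (induction G rule: finite_ne_induct)
  case (singleton x) then show ?case by simp
next
  case (insert x F)
  have "continuous_on S (\<lambda>s. min (h x s) (Min ((\<lambda>g. h g s) ` F)))"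
    using insert by (intro continuous_on_min) auto
  moreover have "Min ((\<lambda>g. h g s) ` insert x F) = min (h x s) (Min ((\<lambda>g. h g s) ` F))" for s
    using insert by (simp add: Min_insert)
  ultimately show ?case by simp
qed



lemma convex_on_affine_comp:
  fixes f :: "'a::real_vector \<Rightarrow> real"
  assumes "convex_on UNIV f"
  shows "convex_on UNIV (\<lambda>v. f (s + c *\<^sub>R v))"
proof (rule convex_onI)
  fix t x y :: "_" assume t: "0 < (t::real)" "t < 1"
  have "s + c *\<^sub>R ((1 - t) *\<^sub>R x + t *\<^sub>R y) = (1 - t) *\<^sub>R (s + c *\<^sub>R x) + t *\<^sub>R (s + c *\<^sub>R y)"
    by (simp add: algebra_simps)
  then show "f (s + c *\<^sub>R ((1 - t) *\<^sub>R x + t *\<^sub>R y)) \<le> (1 - t) * f (s + c *\<^sub>R x) + t * f (s + c *\<^sub>R y)"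
    using convex_onD[OF assms, of t "s + c *\<^sub>R x" "s + c *\<^sub>R y"] t by simp
qed simp

lemma half_unit: "-1 \<le> (t::real) \<Longrightarrow> t \<le> 1 \<Longrightarrow> 0 \<le> (t + 1) / 2 \<and> (t + 1) / 2 \<le> 1"
  by (auto simp: field_simps)

lemma half_diff: "(M::real) > 0 \<Longrightarrow> (a / M + 1) / 2 - (b / M + 1) / 2 = (a - b) / (2 * M)"
  by (simp add: field_simps)

lemma inv_le_self: "1 \<le> (N::real) \<Longrightarrow> 0 \<le> a \<Longrightarrow> (1 / N) * a \<le> a"
  using mult_right_mono[of "1 / N" 1 a] by simp

lemma approx_NE:
  fixes R :: "'e \<Rightarrow> real^'d \<Rightarrow> real" and W :: "(real^'d) set" and E :: "'e set"
  assumes finE: "finite E" and Ene: "E \<noteq> {}" and Wc: "compact W" and Wcv: "convex W" and Wne: "W \<noteq> {}"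
    and Rcv: "\<And>e. e \<in> E \<Longrightarrow> convex_on UNIV (R e)"
    and Rct: "\<And>e. e \<in> E \<Longrightarrow> continuous_on UNIV (R e)"
    and eta: "\<eta> > 0"
  shows "\<exists>ws. (\<forall>q\<in>E. ws q \<in> W) \<and> (\<forall>e\<in>E. \<forall>v\<in>W. R e (w_av E ws) \<le> R e (w_av E (ws(e:=v))) + \<eta>)"
proof -
  define N where "N = real (card E)"
  have N0: "N > 0" using finE Ene by (simp add: N_def card_gt_0_iff)
  have N1: "1 \<le> N" using finE Ene by (simp add: N_def Suc_leI card_gt_0_iff)
  have Wcl: "closed W" using Wc by (rule compact_imp_closed)
  obtain M where M: "M > 0" "\<And>x. x \<in> W \<Longrightarrow> norm x \<le> M"
    using compact_imp_bounded[OF Wc] unfolding bounded_pos by blast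
  define \<kappa> where "\<kappa> = \<eta> / 3"
  have \<kappa>: "\<kappa> > 0" using eta by (simp add: \<kappa>_def)
  have "\<exists>d>0. \<forall>e\<in>E. \<forall>x\<in>W. \<forall>y\<in>W. dist x y < d \<longrightarrow> \<bar>R e x - R e y\<bar> < \<kappa>"
  proof (rule finite_delta[OF finE])
    fix e assume e: "e \<in> E"
    have "uniformly_continuous_on W (R e)"
      using compact_uniformly_continuous[OF continuous_on_subset[OF Rct[OF e]] Wc] by simp
    then obtain d where "d > 0" "\<forall>x\<in>W. \<forall>x'\<in>W. dist x' x < d \<longrightarrow> dist (R e x') (R e x) < \<kappa>"
      unfolding uniformly_continuous_on_def using \<kappa> by blast
    then show "\<exists>d>0. \<forall>x\<in>W. \<forall>y\<in>W. dist x y < d \<longrightarrow> \<bar>R e x - R e y\<bar> < \<kappa>"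
      by (auto simp: dist_real_def)
  qed auto
  then obtain dR where dR: "dR > 0"
    "\<And>e x y. e \<in> E \<Longrightarrow> x \<in> W \<Longrightarrow> y \<in> W \<Longrightarrow> dist x y < dR \<Longrightarrow> \<bar>R e x - R e y\<bar> < \<kappa>"
    by blast
  obtain G where G: "G \<subseteq> W" "finite G" "W \<subseteq> (\<Union>g\<in>G. ball g dR)"
    using compactE_image[OF Wc, of W "\<lambda>g. ball g dR"] dR(1) by force
  have Gne: "G \<noteq> {}" using G Wne by auto
  define mn where "mn e s = Min ((\<lambda>g. R e (s + (1/N) *\<^sub>R g)) ` G)" for e s
  define lam where "lam e s g = max 0 (mn e s + \<kappa> - R e (s + (1/N) *\<^sub>R g))" for e s g
  define S where "S e s = (\<Sum>g\<in>G. lam e s g)" for e s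
  define Ph where "Ph e s = (1 / S e s) *\<^sub>R (\<Sum>g\<in>G. lam e s g *\<^sub>R g)" for e s
  have mn_le: "mn e s \<le> R e (s + (1/N) *\<^sub>R g)" if "g \<in> G" for e s g
    unfolding mn_def using G(2) that by (intro Min_le) auto
  have S_pos: "S e s \<ge> \<kappa>" for e s
  proof -
    have "mn e s \<in> (\<lambda>g. R e (s + (1/N) *\<^sub>R g)) ` G"
      unfolding mn_def using G(2) Gne by (intro Min_in) auto
    then obtain g0 where g0: "g0 \<in> G" "mn e s = R e (s + (1/N) *\<^sub>R g0)" by auto
    have "lam e s g0 = \<kappa>" using g0 \<kappa> by (simp add: lam_def)
    moreover have "lam e s g0 \<le> S e s"
      unfolding S_def using G(2) g0(1) by (intro member_le_sum) (auto simp: lam_def)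
    ultimately show ?thesis by simp
  qed
  have lam_nn: "lam e s g \<ge> 0" for e s g by (simp add: lam_def)
  have Ph_eq: "Ph e s = (\<Sum>g\<in>G. (lam e s g / S e s) *\<^sub>R g)" for e s
    unfolding Ph_def by (simp add: scaleR_sum_right)
  have wsum: "(\<Sum>g\<in>G. lam e s g / S e s) = 1" for e s
    using S_pos[of e s] \<kappa> unfolding S_def by (simp add: sum_divide_distrib[symmetric])
  have Ph_W: "Ph e s \<in> W" for e s
    unfolding Ph_eq using G S_pos[of e s] \<kappa>
    by (intro convex_sum[OF G(2) Wcv wsum]) (auto intro!: divide_nonneg_pos lam_nn)
  have Ph_jensen: "R e (s + (1/N) *\<^sub>R Ph e s) \<le> mn e s + \<kappa>" if e: "e \<in> E" for e s
  proof -
    have cv: "convex_on UNIV (\<lambda>v. R e (s + (1/N) *\<^sub>R v))"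
      by (rule convex_on_affine_comp[OF Rcv[OF e]])
    have "R e (s + (1/N) *\<^sub>R Ph e s) \<le> (\<Sum>g\<in>G. (lam e s g / S e s) * R e (s + (1/N) *\<^sub>R g))"
      unfolding Ph_eq using S_pos[of e s] \<kappa>
      by (intro convex_on_sum[OF G(2) Gne cv wsum]) (auto intro!: divide_nonneg_pos lam_nn)
    also have "\<dots> \<le> (\<Sum>g\<in>G. (lam e s g / S e s) * (mn e s + \<kappa>))"
    proof (intro sum_mono)
      fix g assume "g \<in> G"
      show "(lam e s g / S e s) * R e (s + (1/N) *\<^sub>R g) \<le> (lam e s g / S e s) * (mn e s + \<kappa>)"
      proof (cases "lam e s g = 0")
        case True then show ?thesis by simp
      next
        case False
        then have "R e (s + (1/N) *\<^sub>R g) \<le> mn e s + \<kappa>" by (auto simp: lam_def max_def split: if_splits)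
        then show ?thesis using S_pos[of e s] \<kappa> lam_nn[of e s g]
          by (intro mult_left_mono) auto
      qed
    qed
    also have "\<dots> = (\<Sum>g\<in>G. lam e s g / S e s) * (mn e s + \<kappa>)"
      by (rule sum_distrib_right[symmetric])
    also have "\<dots> = mn e s + \<kappa>" using wsum[of e s] by simp
    finally show ?thesis .
  qed
  have Ph_cont: "continuous_on UNIV (Ph e)" if e: "e \<in> E" for e
  proof -
    have c1: "continuous_on UNIV (\<lambda>s. R e (s + (1/N) *\<^sub>R g))" for g
      by (rule continuous_on_compose2[OF Rct[OF e]]) (auto intro!: continuous_intros)
    have cmn: "continuous_on UNIV (mn e)"
      unfolding mn_def by (rule continuous_on_Min_finite[OF G(2) Gne c1])
    have clam: "continuous_on UNIV (\<lambda>s. lam e s g)" for g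
      unfolding lam_def by (intro continuous_intros cmn c1)
    have cS: "continuous_on UNIV (S e)"
      unfolding S_def by (intro continuous_on_sum clam)
    have "continuous_on UNIV (\<lambda>s. (1 / S e s) *\<^sub>R (\<Sum>g\<in>G. lam e s g *\<^sub>R g))"
      using S_pos \<kappa> by (intro continuous_intros cS clam) (metis order_less_le_trans less_irrefl)
    then show ?thesis unfolding Ph_def .
  qed
  have Pin: "closest_point W y \<in> W" for y using closest_point_in_set[OF Wcl Wne] .
  define D where "D = real CARD('d)"
  have D0: "D > 0" unfolding D_def by simp
  have uPh: "\<exists>d>0. \<forall>e\<in>E. \<forall>x\<in>cball 0 M. \<forall>y\<in>cball 0 M. dist x y < d \<longrightarrow> norm (Ph e x - Ph e y) < c"
    if c: "c > 0" for c
  proof (rule finite_delta[OF finE])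
    fix e assume e: "e \<in> E"
    have "uniformly_continuous_on (cball 0 M) (Ph e)"
      using compact_uniformly_continuous[OF continuous_on_subset[OF Ph_cont[OF e]] compact_cball] by simp
    then obtain d where "d > 0" "\<forall>x\<in>cball 0 M. \<forall>x'\<in>cball 0 M. dist x' x < d \<longrightarrow> dist (Ph e x') (Ph e x) < c"
      unfolding uniformly_continuous_on_def using c by blast
    then show "\<exists>d>0. \<forall>x\<in>cball 0 M. \<forall>y\<in>cball 0 M. dist x y < d \<longrightarrow> norm (Ph e x - Ph e y) < c"
      by (auto simp: dist_norm)
  qed auto
  define dec :: "('e \<times> 'd \<Rightarrow> real) \<Rightarrow> 'e \<Rightarrow> real^'d" where "dec x e = (\<chi> j. (2 * x (e,j) - 1) * M)" for x e
  define wsx where "wsx x = (\<lambda>e. closest_point W (dec x e))" for x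
  define sx where "sx x e = w_av E ((wsx x)(e:=0))" for x e
  define F where "F x = (\<lambda>(e,j). ((Ph e (sx x e)) $ j / M + 1) / 2)" for x
  define I where "I = E \<times> (UNIV :: 'd set)"
  have finI: "finite I" unfolding I_def using finE by simp
  have wsxW: "wsx x e \<in> W" for x e unfolding wsx_def by (rule Pin)
  have sx_norm: "norm (sx x e) \<le> M" if "e \<in> E" for x e
    unfolding sx_def using M wsxW by (intro w_av_norm[OF finE Ene]) auto
  have Ph_comp: "\<bar>Ph e s $ j\<bar> \<le> M" for e s j
    using component_le_norm_cart[of "Ph e s" j] M(2)[OF Ph_W[of e s]] by linarith
  have maps: "\<forall>i\<in>I. 0 \<le> F x i \<and> F x i \<le> 1" for x
  proof
    fix i assume "i \<in> I"
    obtain e j where i: "i = (e, j)" by (cases i)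
    define c where "c = Ph e (sx x e) $ j"
    have c: "-M \<le> c" "c \<le> M" using Ph_comp[of e "sx x e" j] unfolding c_def by linarith+
    have c1: "-1 \<le> c / M" using c M(1) by (simp add: le_divide_eq)
    have c2: "c / M \<le> 1" using c M(1) by (simp add: divide_le_eq)
    have Fx: "F x i = (c / M + 1) / 2" unfolding F_def i c_def by simp
    show "0 \<le> F x i \<and> F x i \<le> 1" unfolding Fx using half_unit[OF c1 c2] .
  qed
  have dec_diff: "norm (dec x e - dec y e) \<le> D * (2 * M * \<delta>)"
    if "\<forall>i\<in>I. \<bar>x i - y i\<bar> \<le> \<delta>" "e \<in> E" for x y e \<delta>
  proof -
    have "norm (dec x e - dec y e) \<le> (\<Sum>j\<in>UNIV. \<bar>(dec x e - dec y e) $ j\<bar>)" by (rule norm_le_l1_cart)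
    also have "\<dots> \<le> (\<Sum>j\<in>(UNIV::'d set). 2 * M * \<delta>)"
    proof (intro sum_mono)
      fix j :: 'd
      have "(dec x e - dec y e) $ j = 2 * M * (x (e,j) - y (e,j))" unfolding dec_def by (simp add: algebra_simps)
      moreover have "\<bar>x (e,j) - y (e,j)\<bar> \<le> \<delta>" using that unfolding I_def by auto
      ultimately show "\<bar>(dec x e - dec y e) $ j\<bar> \<le> 2 * M * \<delta>"
        using M(1) by (simp add: abs_mult)
    qed
    also have "\<dots> = D * (2 * M * \<delta>)" unfolding D_def by simp
    finally show ?thesis .
  qed
  have uc: "\<exists>\<delta>>0. \<forall>x y. (\<forall>i\<in>I. 0 \<le> x i \<and> x i \<le> 1) \<longrightarrow> (\<forall>i\<in>I. 0 \<le> y i \<and> y i \<le> 1)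
            \<longrightarrow> (\<forall>i\<in>I. \<bar>x i - y i\<bar> \<le> \<delta>) \<longrightarrow> (\<forall>i\<in>I. \<bar>F x i - F y i\<bar> \<le> \<epsilon>)" if \<epsilon>: "\<epsilon> > 0" for \<epsilon>
  proof -
    obtain d1 where d1: "d1 > 0" "\<And>e x y. e \<in> E \<Longrightarrow> x \<in> cball 0 M \<Longrightarrow> y \<in> cball 0 M \<Longrightarrow> dist x y < d1 \<Longrightarrow>
       norm (Ph e x - Ph e y) < 2 * M * \<epsilon>"
      using uPh[of "2 * M * \<epsilon>"] M(1) \<epsilon> by auto
    define \<delta> where "\<delta> = d1 / (4 * M * D)"
    have \<delta>: "\<delta> > 0" using d1 M D0 by (simp add: \<delta>_def)
    have key: "D * (2 * M * \<delta>) < d1" using d1 M D0 by (simp add: \<delta>_def field_simps)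
    show ?thesis
    proof (intro exI conjI allI impI ballI)
      show "\<delta> > 0" by fact
      fix x y i
      assume cl: "\<forall>i\<in>I. \<bar>x i - y i\<bar> \<le> \<delta>" and i: "i \<in> I"
      obtain e j where ij: "i = (e, j)" by (cases i)
      have e: "e \<in> E" using i ij unfolding I_def by auto
      have "norm (sx x e - sx y e) \<le> D * (2 * M * \<delta>)"
        unfolding sx_def
      proof (rule w_av_dist[OF finE Ene])
        fix q assume q: "q \<in> E"
        show "norm (((wsx x)(e:=0)) q - ((wsx y)(e:=0)) q) \<le> D * (2 * M * \<delta>)"
        proof (cases "q = e")
          case True then show ?thesis using D0 M(1) \<delta> by simp
        next
          case False
          have "norm (wsx x q - wsx y q) \<le> norm (dec x q - dec y q)"
            using closest_point_lipschitz[OF Wcv Wcl Wne, of "dec x q" "dec y q"]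
            unfolding wsx_def dist_norm .
          then show ?thesis using False dec_diff[OF cl q] by simp
        qed
      qed
      then have "dist (sx x e) (sx y e) < d1" using key by (simp add: dist_norm)
      then have nn: "norm (Ph e (sx x e) - Ph e (sx y e)) < 2 * M * \<epsilon>"
        using d1(2)[OF e] sx_norm[OF e] by auto
      have "F x i - F y i = (Ph e (sx x e) $ j - Ph e (sx y e) $ j) / (2 * M)"
        unfolding F_def ij split using half_diff[OF M(1)] .
      then have "\<bar>F x i - F y i\<bar> = \<bar>(Ph e (sx x e) - Ph e (sx y e)) $ j\<bar> / (2 * M)"
        using M(1) by (simp add: abs_divide)
      also have "\<dots> \<le> norm (Ph e (sx x e) - Ph e (sx y e)) / (2 * M)"
        using M(1) by (intro divide_right_mono component_le_norm_cart) auto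
      also have "\<dots> \<le> \<epsilon>" using nn M(1) by (simp add: pos_divide_le_eq mult.commute)
      finally show "\<bar>F x i - F y i\<bar> \<le> \<epsilon>" .
    qed
  qed
  define \<epsilon>' where "\<epsilon>' = dR / (8 * M * D)"
  have \<epsilon>': "\<epsilon>' > 0" using dR(1) M(1) D0 by (simp add: \<epsilon>'_def)
  obtain x where xC: "\<forall>i\<in>I. 0 \<le> x i \<and> x i \<le> 1" and xfix: "\<forall>i\<in>I. \<bar>F x i - x i\<bar> \<le> \<epsilon>'"
    using approx_brouwer[OF finI maps uc \<epsilon>'] by blast
  define ws where "ws = wsx x"
  define u where "u e = Ph e (sx x e)" for e
  have u_close: "norm (u e - dec x e) \<le> D * (2 * M * \<epsilon>')" if e: "e \<in> E" for e
  proof -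
    have "norm (u e - dec x e) \<le> (\<Sum>j\<in>UNIV. \<bar>(u e - dec x e) $ j\<bar>)" by (rule norm_le_l1_cart)
    also have "\<dots> \<le> (\<Sum>j\<in>(UNIV::'d set). 2 * M * \<epsilon>')"
    proof (intro sum_mono)
      fix j :: 'd
      have "F x (e,j) = (u e $ j / M + 1) / 2" unfolding F_def u_def by simp
      then have "u e $ j = (2 * F x (e,j) - 1) * M" using M(1) by (simp add: field_simps)
      then have "(u e - dec x e) $ j = 2 * M * (F x (e,j) - x (e,j))" unfolding dec_def by (simp add: algebra_simps)
      moreover have "\<bar>F x (e,j) - x (e,j)\<bar> \<le> \<epsilon>'" using xfix e unfolding I_def by auto
      ultimately show "\<bar>(u e - dec x e) $ j\<bar> \<le> 2 * M * \<epsilon>'"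
        using M(1) by (simp add: abs_mult)
    qed
    also have "\<dots> = D * (2 * M * \<epsilon>')" unfolding D_def by simp
    finally show ?thesis .
  qed
  have uW: "u e \<in> W" for e unfolding u_def by (rule Ph_W)
  have ws_close: "norm (ws e - u e) < dR" if e: "e \<in> E" for e
  proof -
    have "dist (dec x e) (ws e) \<le> dist (dec x e) (u e)"
      unfolding ws_def wsx_def by (rule closest_point_le[OF Wcl uW])
    then have "norm (ws e - u e) \<le> 2 * norm (u e - dec x e)"
      using norm_triangle_ineq[of "ws e - dec x e" "dec x e - u e"]
      by (simp add: dist_norm norm_minus_commute)
    also have "\<dots> \<le> 2 * (D * (2 * M * \<epsilon>'))" using u_close[OF e] by simp
    also have "\<dots> < dR" using dR(1) M(1) D0 by (simp add: \<epsilon>'_def field_simps)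
    finally show ?thesis .
  qed
  show ?thesis
  proof (intro exI conjI ballI)
    fix q show "ws q \<in> W" unfolding ws_def by (rule wsxW)
  next
    fix e v assume e: "e \<in> E" and v: "v \<in> W"
    define s where "s = sx x e"
    have avg: "w_av E (ws(e:=v')) = s + (1/N) *\<^sub>R v'" for v'
    proof -
      have "w_av E ((ws(e:=0))(e:=v')) = w_av E (ws(e:=0)) + (1 / real (card E)) *\<^sub>R (v' - (ws(e:=0)) e)"
        by (rule w_av_upd[OF finE e])
      then show ?thesis unfolding s_def sx_def ws_def N_def by simp
    qed
    have avg0: "w_av E ws = s + (1/N) *\<^sub>R ws e" using avg[of "ws e"] by simp
    have inW: "s + (1/N) *\<^sub>R v' \<in> W" if "v' \<in> W" for v'
    proof -
      have "w_av E (ws(e:=v')) \<in> W" using that wsxW unfolding ws_def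
        by (intro w_av_in[OF finE Ene Wcv]) auto
      then show ?thesis using avg by simp
    qed
    have wsW: "ws e \<in> W" unfolding ws_def by (rule wsxW)
    have "dist (s + (1/N) *\<^sub>R ws e) (s + (1/N) *\<^sub>R u e) = (1/N) * norm (ws e - u e)"
      using N0 by (simp add: dist_norm scaleR_diff_right[symmetric])
    also have "\<dots> \<le> norm (ws e - u e)" using inv_le_self[OF N1 norm_ge_zero] .
    also have "\<dots> < dR" using ws_close[OF e] .
    finally have s1: "R e (s + (1/N) *\<^sub>R ws e) \<le> R e (s + (1/N) *\<^sub>R u e) + \<kappa>"
      using dR(2)[OF e inW[OF wsW] inW[OF uW[of e]]] by linarith
    have s2: "R e (s + (1/N) *\<^sub>R u e) \<le> mn e s + \<kappa>"
      using Ph_jensen[OF e, of s] unfolding u_def s_def .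
    obtain g where g: "g \<in> G" "dist g v < dR" using G(3) v by auto
    have "dist (s + (1/N) *\<^sub>R g) (s + (1/N) *\<^sub>R v) = (1/N) * dist g v"
      using N0 by (simp add: dist_norm scaleR_diff_right[symmetric])
    also have "\<dots> \<le> dist g v" using inv_le_self[OF N1 zero_le_dist] .
    also have "\<dots> < dR" using g(2) .
    finally have s3: "R e (s + (1/N) *\<^sub>R g) \<le> R e (s + (1/N) *\<^sub>R v) + \<kappa>"
      using dR(2)[OF e inW[of g] inW[OF v]] G(1) g(1) by auto
    have s4: "mn e s \<le> R e (s + (1/N) *\<^sub>R g)" by (rule mn_le[OF g(1)])
    show "R e (w_av E ws) \<le> R e (w_av E (ws(e:=v))) + \<eta>"
      unfolding avg0 avg using s1 s2 s3 s4 unfolding \<kappa>_def by linarith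
  qed
qed



lemma exists_NE:
  fixes R :: "'e \<Rightarrow> real^'d \<Rightarrow> real" and W :: "(real^'d) set" and E :: "'e set"
  assumes finE: "finite E" and Ene: "E \<noteq> {}" and Wc: "compact W" and Wcv: "convex W" and Wne: "W \<noteq> {}"
    and Rcv: "\<And>e. e \<in> E \<Longrightarrow> convex_on UNIV (R e)"
    and Rct: "\<And>e. e \<in> E \<Longrightarrow> continuous_on UNIV (R e)"
  shows "\<exists>ws. (\<forall>q\<in>E. ws q \<in> W) \<and> (\<forall>e\<in>E. \<forall>v\<in>W. R e (w_av E ws) \<le> R e (w_av E (ws(e:=v))))"
proof -
  have "\<forall>k. \<exists>ws. (\<forall>q\<in>E. ws q \<in> W) \<and> (\<forall>e\<in>E. \<forall>v\<in>W. R e (w_av E ws) \<le> R e (w_av E (ws(e:=v))) + inverse (real (Suc k)))"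
    using approx_NE[OF finE Ene Wc Wcv Wne Rcv Rct] by simp
  then obtain X where X: "\<And>k q. q \<in> E \<Longrightarrow> X k q \<in> W"
    "\<And>k e v. e \<in> E \<Longrightarrow> v \<in> W \<Longrightarrow> R e (w_av E (X k)) \<le> R e (w_av E ((X k)(e:=v))) + inverse (real (Suc k))"
    by metis
  obtain L r where r: "strict_mono r" and L: "\<And>q. q \<in> E \<Longrightarrow> L q \<in> W" "\<And>q. q \<in> E \<Longrightarrow> (\<lambda>k. X (r k) q) \<longlonglongrightarrow> L q"
    using finite_seq_compact[OF finE Wc, of X] X(1) by blast
  have avlim: "(\<lambda>k. w_av E (Y k)) \<longlonglongrightarrow> w_av E Z" if "\<And>q. q \<in> E \<Longrightarrow> (\<lambda>k. Y k q) \<longlonglongrightarrow> Z q" for Y Z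
    unfolding w_av_def by (intro tendsto_scaleR tendsto_const tendsto_sum that)
  show ?thesis
  proof (intro exI conjI ballI)
    fix q assume "q \<in> E" then show "L q \<in> W" by (rule L(1))
  next
    fix e v assume e: "e \<in> E" and v: "v \<in> W"
    have ic: "isCont (R e) x" for x
      using Rct[OF e] continuous_on_eq_continuous_at[OF open_UNIV] by blast
    have l1: "(\<lambda>k. R e (w_av E (X (r k)))) \<longlonglongrightarrow> R e (w_av E L)"
      by (rule isCont_tendsto_compose[OF ic avlim]) (rule L(2))
    have "(\<lambda>k. ((X (r k))(e:=v)) q) \<longlonglongrightarrow> (L(e:=v)) q" if "q \<in> E" for q
      using L(2)[OF that] by (cases "q = e") auto
    then have l2: "(\<lambda>k. R e (w_av E ((X (r k))(e:=v)))) \<longlonglongrightarrow> R e (w_av E (L(e:=v)))"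
      by (intro isCont_tendsto_compose[OF ic avlim])
    have l3: "(\<lambda>k. R e (w_av E ((X (r k))(e:=v))) + inverse (real (Suc k))) \<longlonglongrightarrow> R e (w_av E (L(e:=v))) + 0"
      by (intro tendsto_add l2 LIMSEQ_inverse_real_of_nat)
    have le: "R e (w_av E (X (r k))) \<le> R e (w_av E ((X (r k))(e:=v))) + inverse (real (Suc k))" for k
    proof -
      have "k \<le> r k" using r by (rule seq_suble)
      then have "inverse (real (Suc (r k))) \<le> inverse (real (Suc k))"
        by (simp add: le_imp_inverse_le)
      then show ?thesis using X(2)[OF e v, of "r k"] by linarith
    qed
    show "R e (w_av E L) \<le> R e (w_av E (L(e:=v)))"
      using LIMSEQ_le[OF l1 l3] le by auto
  qed
qed

lemma NE_interior_opt:
  fixes R :: "real^'d \<Rightarrow> real" and ws :: "'e \<Rightarrow> real^'d"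
  assumes finE: "finite E" and e: "e \<in> E" and Rcv: "convex_on UNIV R"
    and NE: "\<And>v. v \<in> W \<Longrightarrow> R (w_av E ws) \<le> R (w_av E (ws(e:=v)))"
    and int: "ws e \<in> interior W"
  shows "R (w_av E ws) \<le> R v"
proof -
  define a where "a = w_av E ws"
  define N where "N = real (card E)"
  have N0: "N > 0" using finE e by (simp add: N_def card_gt_0_iff) blast
  obtain r where r: "r > 0" "ball (ws e) r \<subseteq> W" using int mem_interior by blast
  show ?thesis
  proof (cases "v = a")
    case True then show ?thesis by (simp add: a_def)
  next
    case False
    then have nv: "norm (v - a) > 0" by simp
    define t where "t = min (1/2) (r / (2 * N * norm (v - a)))"
    have t0: "t > 0" using r N0 nv by (simp add: t_def)
    have t1: "t < 1" by (simp add: t_def)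
    define v' where "v' = ws e + (N * t) *\<^sub>R (v - a)"
    have "dist (ws e) v' = N * t * norm (v - a)"
      using N0 t0 by (simp add: v'_def dist_norm)
    also have "\<dots> \<le> N * (r / (2 * N * norm (v - a))) * norm (v - a)"
      using N0 nv t0 by (intro mult_right_mono mult_left_mono) (auto simp: t_def)
    also have "\<dots> = r / 2" using N0 nv by (simp add: field_simps)
    also have "\<dots> < r" using r by simp
    finally have "v' \<in> W" using r(2) by auto
    then have "R a \<le> R (w_av E (ws(e:=v')))" using NE unfolding a_def by blast
    also have "w_av E (ws(e:=v')) = (1 - t) *\<^sub>R a + t *\<^sub>R v"
      using w_av_upd[OF finE e, of ws v'] N0 unfolding a_def[symmetric] N_def[symmetric]
      by (simp add: v'_def algebra_simps)
    also have "R ((1 - t) *\<^sub>R a + t *\<^sub>R v) \<le> (1 - t) * R a + t * R v"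
      using convex_onD[OF Rcv, of t a v] t0 t1 by simp
    finally have "t * R a \<le> t * R v" by (simp add: algebra_simps)
    then show ?thesis using t0 unfolding a_def by simp
  qed
qed



theorem theorem3:
  fixes E :: "'e set"
    and D :: "'e \<Rightarrow> ((real^'n) \<times> real) measure"
    and Phi :: "real^'n \<Rightarrow> real^'d"
    and l :: "real \<Rightarrow> real \<Rightarrow> real"
    and W :: "(real^'d) set"
  assumes finE: "finite E"
    and prob: "\<And>e. e \<in> E \<Longrightarrow> prob_space (D e)"
    and integ: "\<And>e w. e \<in> E \<Longrightarrow> integrable (D e) (\<lambda>p. l (w \<bullet> Phi (fst p)) (snd p))"
    and W_closed: "closed W" and W_bounded: "bounded W" and W_convex: "convex W"
    and W_int: "interior W \<noteq> {}"
    and l_convex: "\<And>z y. convex_on UNIV (\<lambda>w::real^'d. l (w \<bullet> z) y)"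
    and l_cont: "\<And>z y. continuous_on UNIV (\<lambda>w::real^'d. l (w \<bullet> z) y)"
  shows "(\<exists>ws. ens_pure_NE E D l Phi W ws) \<and>
         (\<forall>ws. ens_pure_NE E D l Phi W ws \<and> (\<forall>q\<in>E. ws q \<in> interior W) \<longrightarrow>
            (\<forall>e\<in>E. \<forall>v. lin_risk (D e) l Phi (w_av E ws) \<le> lin_risk (D e) l Phi v))"
proof -
  define R where "R e = lin_risk (D e) l Phi" for e
  have Rcv: "convex_on UNIV (R e)" if e: "e \<in> E" for e
  proof (rule convex_onI)
    fix t :: real and x y :: "real^'d" assume t: "0 < t" "t < 1"
    have "R e ((1 - t) *\<^sub>R x + t *\<^sub>R y) = (\<integral>p. l (((1 - t) *\<^sub>R x + t *\<^sub>R y) \<bullet> Phi (fst p)) (snd p) \<partial>D e)"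
      unfolding R_def lin_risk_def ..
    also have "\<dots> \<le> (\<integral>p. (1 - t) * l (x \<bullet> Phi (fst p)) (snd p) + t * l (y \<bullet> Phi (fst p)) (snd p) \<partial>D e)"
    proof (rule integral_mono)
      show "integrable (D e) (\<lambda>p. l (((1 - t) *\<^sub>R x + t *\<^sub>R y) \<bullet> Phi (fst p)) (snd p))" by (rule integ[OF e])
      show "integrable (D e) (\<lambda>p. (1 - t) * l (x \<bullet> Phi (fst p)) (snd p) + t * l (y \<bullet> Phi (fst p)) (snd p))"
        using integ[OF e, of x] integ[OF e, of y] by auto
      fix p
      show "l (((1 - t) *\<^sub>R x + t *\<^sub>R y) \<bullet> Phi (fst p)) (snd p) \<le> (1 - t) * l (x \<bullet> Phi (fst p)) (snd p) + t * l (y \<bullet> Phi (fst p)) (snd p)"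
        using convex_onD[OF l_convex[of "Phi (fst p)" "snd p"], of t x y] t by simp
    qed
    also have "\<dots> = (1 - t) * R e x + t * R e y"
      unfolding R_def lin_risk_def
      using integ[OF e, of x] integ[OF e, of y] by (simp add: integral_add)
    finally show "R e ((1 - t) *\<^sub>R x + t *\<^sub>R y) \<le> (1 - t) * R e x + t * R e y" .
  qed simp
  have Rct: "continuous_on UNIV (R e)" if "e \<in> E" for e
    using convex_on_continuous[OF open_UNIV Rcv[OF that]] .
  have NEiff: "ens_pure_NE E D l Phi W ws \<longleftrightarrow> (\<forall>q\<in>E. ws q \<in> W) \<and>
      (\<forall>e\<in>E. \<forall>v\<in>W. R e (w_av E ws) \<le> R e (w_av E (ws(e:=v))))" for ws
    unfolding ens_pure_NE_def ens_utility_def R_def by simp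
  have Wc: "compact W" using W_closed W_bounded by (simp add: compact_eq_bounded_closed)
  have Wne: "W \<noteq> {}" using W_int interior_subset by blast
  show ?thesis
  proof (intro conjI allI impI ballI)
    show "\<exists>ws. ens_pure_NE E D l Phi W ws"
    proof (cases "E = {}")
      case True then show ?thesis unfolding NEiff by simp
    next
      case False
      have "\<exists>ws. (\<forall>q\<in>E. ws q \<in> W) \<and> (\<forall>e\<in>E. \<forall>v\<in>W. R e (w_av E ws) \<le> R e (w_av E (ws(e:=v))))"
        by (rule exists_NE[OF finE False Wc W_convex Wne]) (auto intro: Rcv Rct)
      then show ?thesis unfolding NEiff .
    qed
  next
    fix ws e v
    assume H: "ens_pure_NE E D l Phi W ws \<and> (\<forall>q\<in>E. ws q \<in> interior W)" and e: "e \<in> E"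
    have "R e (w_av E ws) \<le> R e v"
    proof (rule NE_interior_opt[OF finE e Rcv[OF e]])
      show "\<And>v. v \<in> W \<Longrightarrow> R e (w_av E ws) \<le> R e (w_av E (ws(e:=v)))" using H e unfolding NEiff by blast
      show "ws e \<in> interior W" using H e by blast
    qed
    then show "lin_risk (D e) l Phi (w_av E ws) \<le> lin_risk (D e) l Phi v" unfolding R_def .
  qed
qed

end
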